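(* Let $\Lambda=(\Lambda_\nu)_{\nu=1}^d$ with $\Lambda_\nu\subset\mathbb{Z}_+^n$ finite nonempty, $P\in\mathcal{P}_\Lambda$, $S\subset N_n$, and let $\mathbb{F}=(\mathbb{F}_\nu)$ be a $d$-tuple with $\mathbb{F}_\nu$ a face of ${\bf N}(\Lambda_\nu,S)$. Suppose $\sup_{r\in I(S),\xi\in\mathbb{R}^d}|\mathcal{I}(P,\xi,r)|<\infty$, and suppose there is $u=(u_j)\in\bigcap_{\nu=1}^d(\mathbb{F}_\nu^* )^\circ$ with $u_j=0$ for $j\in S_0$ and $u_j>0$ for $j\in S\setminus S_0$, where $S_0\subset S$. Then $$\sup\big\{|\mathcal{I}(P_{\mathbb{F}},\xi,a,b)|:\xi\in\mathbb{R}^d,\ a,b\in I(S_0),\ a_j<b_j\ \forall j\big\}<\infty.$$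
   Context: $P=(P_\nu)$, $P_\nu(t)=\sum_{\mathfrak m\in\Lambda_\nu}c^\nu_{\mathfrak m}t^{\mathfrak m}$ with nonzero real coefficients ($\mathcal{P}_\Lambda$ is the set of such). For $T\subset N_n=\{1,\dots,n\}$, $I(T)=\prod_jI_j$ with $I_j=(0,1)$ for $j\in T$ and $I_j=(0,\infty)$ otherwise. $\mathcal{I}(P,\xi,r)=\lim_{\epsilon\to0}\int_{\prod_j\{\epsilon_j<|t_j|<r_j\}}e^{i\langle\xi,P(t)\rangle}\frac{dt_1}{t_1}\cdots\frac{dt_n}{t_n}$. $\mathcal{I}(P_{\mathbb{F}},\xi,a,b)=\int_{\prod_j\{a_j<|t_j|<b_j\}}\exp\big(i\sum_\nu\xi_\nu\sum_{\mathfrak m\in\mathbb{F}_\nu\cap\Lambda_\nu}c^\nu_{\mathfrak m}t^{\mathfrak m}\big)\frac{dt_1}{t_1}\cdots\frac{dt_n}{t_n}$. $\mathbb{R}_+^S=\{u:u_j\ge0\ (j\in S),u_j=0\ (j\notin S)\}$, $Z(S)=\{u:u_j\ge0\ \forall j\in S\}$, ${\bf N}(\Omega,S)=$ convex hull of $\Omega+\mathbb{R}_+^S$. Face: $\mathbb{F}\subset\mathbb{P}$ with $\mathbb{F}=\emptyset$ or $\exists\mathfrak q,r$: $\langle\mathfrak q,\cdot\rangle=r$ on $\mathbb{F}$, $>r$ on $\mathbb{P}\setminus\mathbb{F}$. For nonempty face, $(\mathbb{F}^* )^\circ=\{\mathfrak q\ne0:\exists r,\langle\mathfrak q,x\rangle=r\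 (x\in\mathbb{F}),\langle\mathfrak q,y\rangle>r\ (y\in\mathbb{P}\setminus\mathbb{F})\}$ relative to $\mathbb{P}={\bf N}(\Lambda_\nu,S)$; for the empty face, $(\mathbb{F}^* )^\circ=Z(S)\setminus\{0\}$. *)

theory Defs
  imports "HOL-Analysis.Analysis"
begin

text \<open>Indices j of N_n are the elements of a finite type 'n; indices nu of 1..d are
  the elements of a finite type 'd. Multi-indices in Z_+^n are functions 'n => nat.\<close>

definition monom :: "real^'n::finite \<Rightarrow> ('n \<Rightarrow> nat) \<Rightarrow> real" where
  "monom t m = (\<Prod>j\<in>UNIV. (t$j) ^ (m j))"

definition polyP :: "(('n::finite \<Rightarrow> nat) \<Rightarrow> real) \<Rightarrow> ('n \<Rightarrow> nat) set \<Rightarrow> real^'n \<Rightarrow> real" where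
  "polyP c L t = (\<Sum>m\<in>L. c m * monom t m)"

definition IS :: "'n::finite set \<Rightarrow> (real^'n) set" where
  "IS T = {r. \<forall>j. 0 < r$j \<and> (j \<in> T \<longrightarrow> r$j < 1)}"

definition osc_int :: "('d::finite \<Rightarrow> real^'n::finite \<Rightarrow> real) \<Rightarrow> real^'d \<Rightarrow> real^'n \<Rightarrow> real^'n \<Rightarrow> complex" where
  "osc_int Q \<xi> a b =
     (LINT t : {t. \<forall>j. a$j < \<bar>t$j\<bar> \<and> \<bar>t$j\<bar> < b$j} | lborel.
        exp (\<i> * complex_of_real (\<Sum>\<nu>\<in>UNIV. \<xi>$\<nu> * Q \<nu> t)) / complex_of_real (\<Prod>j\<in>UNIV. t$j))"

definition mvec :: "('n::finite \<Rightarrow> nat) \<Rightarrow> real^'n" where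
  "mvec m = (\<chi> j. real (m j))"

definition Rplus :: "'n::finite set \<Rightarrow> (real^'n) set" where
  "Rplus S = {u. \<forall>j. (j \<in> S \<longrightarrow> 0 \<le> u$j) \<and> (j \<notin> S \<longrightarrow> u$j = 0)}"

definition Zset :: "'n::finite set \<Rightarrow> (real^'n) set" where
  "Zset S = {u. \<forall>j\<in>S. 0 \<le> u$j}"

definition newton :: "('n::finite \<Rightarrow> nat) set \<Rightarrow> 'n set \<Rightarrow> (real^'n) set" where
  "newton \<Omega> S = convex hull {mvec m + u | m u. m \<in> \<Omega> \<and> u \<in> Rplus S}"

definition is_face :: "(real^'n::finite) set \<Rightarrow> (real^'n) set \<Rightarrow> bool" where
  "is_face F P \<longleftrightarrow> F \<subseteq> P \<and>
     (F = {} \<or> (\<exists>q r. (\<forall>x\<in>F. q \<bullet> x = r) \<and> (\<forall>y\<in>P - F. q \<bullet> y > r)))"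

definition dual_int :: "(real^'n::finite) set \<Rightarrow> (real^'n) set \<Rightarrow> 'n set \<Rightarrow> (real^'n) set" where
  "dual_int F P S = (if F = {} then Zset S - {0}
     else {q. q \<noteq> 0 \<and> (\<exists>r. (\<forall>x\<in>F. q \<bullet> x = r) \<and> (\<forall>y\<in>P - F. q \<bullet> y > r))})"

end

theory Submission
  imports Defs
begin


definition bset :: "real^'n::finite \<Rightarrow> real^'n \<Rightarrow> (real^'n) set" where
  "bset lo hi = {t. \<forall>j. lo$j < \<bar>t$j\<bar> \<and> \<bar>t$j\<bar> < hi$j}"

definition hfun :: "('d::finite \<Rightarrow> real^'n::finite \<Rightarrow> real) \<Rightarrow> real^'d \<Rightarrow> real^'n \<Rightarrow> complex" where
  "hfun Q \<xi> t = exp (\<i> * complex_of_real (\<Sum>\<nu>\<in>UNIV. \<xi>$\<nu> * Q \<nu> t)) / complex_of_real (\<Prod>j\<in>UNIV. t$j)"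

lemma osc_int_eq: "osc_int Q \<xi> a b = set_lebesgue_integral lborel (bset a b) (hfun Q \<xi>)"
  unfolding osc_int_def bset_def hfun_def by simp

lemma bset_meas[measurable]: "bset lo hi \<in> sets borel"
  unfolding bset_def by measurable

lemma polyP_meas[measurable]: "polyP c L \<in> borel_measurable borel"
  unfolding polyP_def[abs_def] monom_def by measurable

lemma prodvec_meas[measurable]: "(\<lambda>x::real^'n::finite. \<Prod>j\<in>UNIV. x$j) \<in> borel_measurable borel"
  by (rule borel_measurable_continuous_onI) (intro continuous_intros)

lemma prodvec_meas2[measurable]: "(\<lambda>x::real^'n::finite. complex_of_real (\<Prod>j\<in>UNIV. x$j)) \<in> borel_measurable borel"
  by (rule borel_measurable_continuous_onI) (intro continuous_intros)

lemma hfun_meas[measurable]: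
  assumes [measurable]: "\<And>\<nu>. Q \<nu> \<in> borel_measurable borel"
  shows "hfun Q \<xi> \<in> borel_measurable borel"
proof -
  have "hfun Q \<xi> = (\<lambda>t. exp (\<i> * complex_of_real (\<Sum>\<nu>\<in>UNIV. \<xi>$\<nu> * Q \<nu> t)) / (\<lambda>x::real^_. complex_of_real (\<Prod>j\<in>UNIV. x$j)) t)"
    unfolding hfun_def by simp
  also have "\<dots> \<in> borel_measurable borel"
    by (intro borel_measurable_divide prodvec_meas2) measurable
  finally show ?thesis .
qed

lemma bset_integrable:
  assumes lo: "\<forall>j. 0 < lo$j" and [measurable]: "\<And>\<nu>. Q \<nu> \<in> borel_measurable borel"
  shows "integrable lborel (\<lambda>t. indicator (bset lo hi) t *\<^sub>R hfun Q \<xi> t)"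
proof (rule integrableI_bounded_set_indicator[where B="1/(\<Prod>j\<in>UNIV. lo$j)"])
  show "bset lo hi \<in> sets lborel" by simp
  show "hfun Q \<xi> \<in> borel_measurable lborel" by simp
  have "bset lo hi \<subseteq> cbox (-hi) hi"
    by (auto simp: bset_def mem_box_cart abs_less_iff less_imp_le; smt (verit))
  then have "bounded (bset lo hi)" using bounded_cbox bounded_subset by blast
  then show "emeasure lborel (bset lo hi) < \<infinity>" by (rule emeasure_bounded_finite)
  show "AE x in lborel. x \<in> bset lo hi \<longrightarrow> norm (hfun Q \<xi> x) \<le> 1 / (\<Prod>j\<in>UNIV. lo$j)"
  proof (intro AE_I2 impI)
    fix x assume x: "x \<in> bset lo hi"
    have le: "(\<Prod>j\<in>UNIV. lo$j) \<le> (\<Prod>j\<in>UNIV. \<bar>x$j\<bar>)"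
      using x lo by (intro prod_mono) (auto simp: bset_def less_imp_le)
    have pos: "0 < (\<Prod>j\<in>UNIV. lo$j)" using lo by (intro prod_pos) auto
    have "norm (hfun Q \<xi> x) = 1 / (\<Prod>j\<in>UNIV. \<bar>x$j\<bar>)"
      by (simp add: hfun_def norm_divide abs_prod flip: prod_norm)
    also have "\<dots> \<le> 1 / (\<Prod>j\<in>UNIV. lo$j)"
      using le pos by (intro divide_left_mono) auto
    finally show "norm (hfun Q \<xi> x) \<le> 1 / (\<Prod>j\<in>UNIV. lo$j)" .
  qed
qed

lemma hyper_null: "{t::real^'n::finite. t$j = c} \<in> null_sets lborel"
proof -
  have "negligible {t::real^'n. t \<bullet> axis j 1 = c}"
    by (rule negligible_standard_hyperplane) (simp add: cart_eq_inner_axis Basis_vec_def, blast)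
  then have "negligible {t::real^'n. t$j = c}" by (simp add: cart_eq_inner_axis)
  moreover have "{t::real^'n. t$j = c} \<in> sets lborel" by measurable
  ultimately show ?thesis
    by (auto simp: null_sets_completion_iff negligible_iff_null_sets)
qed

lemma AE_abs_ne: "AE t in lborel. \<forall>j\<in>UNIV. \<bar>(t::real^'n::finite)$j\<bar> \<noteq> a$j"
proof (rule AE_finite_allI, simp)
  fix j
  show "AE t in lborel. \<bar>(t::real^'n::finite)$j\<bar> \<noteq> a$j"
    by (rule AE_I'[OF null_sets.Un[OF hyper_null[of j "a$j"] hyper_null[of j "-a$j"]]]) auto
qed

definition cT :: "real^'n::finite \<Rightarrow> real^'n \<Rightarrow> 'n set \<Rightarrow> real^'n" where
  "cT a b T = (\<chi> j. if j \<in> T then a$j else b$j)"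

lemma ind_bset_prod:
  "indicator (bset lo hi) t = (\<Prod>j\<in>UNIV. (indicator {x::real. lo$j < \<bar>x\<bar> \<and> \<bar>x\<bar> < hi$j} (t$j) :: real))"
proof (cases "t \<in> bset lo hi")
  case True then show ?thesis by (simp add: bset_def indicator_def)
next
  case False
  then obtain j where "\<not> (lo$j < \<bar>t$j\<bar> \<and> \<bar>t$j\<bar> < hi$j)" by (auto simp: bset_def)
  then have "(\<Prod>j\<in>UNIV. (indicator {x::real. lo$j < \<bar>x\<bar> \<and> \<bar>x\<bar> < hi$j} (t$j) :: real)) = 0"
    by (intro prod_zero) (auto simp: indicator_def intro!: bexI[of _ j])
  with False show ?thesis by simp
qed

lemma incl_excl_pt:
  fixes \<epsilon> a b t :: "real^'n::finite"
  assumes ab: "\<forall>j. \<epsilon>$j < a$j \<and> a$j < b$j" and t: "\<forall>j\<in>UNIV. \<bar>t$j\<bar> \<noteq> a$j"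
  shows "(\<Sum>T\<in>Pow UNIV. (-1)^card T * indicator (bset \<epsilon> (cT a b T)) t) = (indicator (bset a b) t :: real)"
proof -
  define I where "I = (\<lambda>c j. indicator {x::real. \<epsilon>$j < \<bar>x\<bar> \<and> \<bar>x\<bar> < c} (t$j) :: real)"
  have "indicator (bset a b) t = (\<Prod>j\<in>UNIV. indicator {x::real. a$j < \<bar>x\<bar> \<and> \<bar>x\<bar> < b$j} (t$j) :: real)"
    by (rule ind_bset_prod)
  also have "\<dots> = (\<Prod>j\<in>UNIV. (- I (a$j) j) + I (b$j) j)"
  proof (rule prod.cong[OF refl])
    fix j
    show "indicator {x::real. a$j < \<bar>x\<bar> \<and> \<bar>x\<bar> < b$j} (t$j) = (- I (a$j) j) + I (b$j) j"
      using ab[rule_format, of j] t[rule_format, of j] by (auto simp: I_def indicator_def)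
  qed
  also have "\<dots> = (\<Sum>X\<in>Pow UNIV. (\<Prod>j\<in>X. - I (a$j) j) * (\<Prod>j\<in>UNIV-X. I (b$j) j))"
    by (rule prod_add) simp
  also have "\<dots> = (\<Sum>T\<in>Pow UNIV. (-1)^card T * indicator (bset \<epsilon> (cT a b T)) t)"
  proof (rule sum.cong[OF refl])
    fix X :: "'n set"
    have 1: "(\<Prod>j\<in>X. - I (a$j) j) = (-1)^card X * (\<Prod>j\<in>X. I (a$j) j)"
    proof -
      have "(\<Prod>j\<in>X. - I (a$j) j) = (\<Prod>j\<in>X. (-1) * I (a$j) j)" by (rule prod.cong) auto
      also have "\<dots> = (\<Prod>j\<in>X. (-1::real)) * (\<Prod>j\<in>X. I (a$j) j)" by (rule prod.distrib)
      also have "\<dots> = (-1)^card X * (\<Prod>j\<in>X. I (a$j) j)" by simp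
      finally show ?thesis .
    qed
    have "indicator (bset \<epsilon> (cT a b X)) t = (\<Prod>j\<in>UNIV. I ((cT a b X)$j) j)"
      unfolding I_def by (rule ind_bset_prod)
    also have "\<dots> = (\<Prod>j\<in>UNIV - X. I ((cT a b X)$j) j) * (\<Prod>j\<in>X. I ((cT a b X)$j) j)"
      by (rule prod.subset_diff) auto
    also have "\<dots> = (\<Prod>j\<in>UNIV - X. I (b$j) j) * (\<Prod>j\<in>X. I (a$j) j)"
      by (auto simp: cT_def intro!: arg_cong2[where f="(*)"] prod.cong)
    finally show "(\<Prod>j\<in>X. - I (a$j) j) * (\<Prod>j\<in>UNIV-X. I (b$j) j) = (-1)^card X * indicator (bset \<epsilon> (cT a b X)) t"
      using 1 by simp
  qed
  finally show ?thesis ..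
qed

lemma incl_excl:
  assumes [measurable]: "\<And>\<nu>. Q \<nu> \<in> borel_measurable borel"
    and ab: "\<forall>j. 0 < \<epsilon>$j \<and> \<epsilon>$j < a$j \<and> a$j < b$j"
  shows "osc_int Q \<xi> a b = (\<Sum>T\<in>Pow UNIV. (-1)^card T * osc_int Q \<xi> \<epsilon> (cT a b T))"
proof -
  have "(\<Sum>T\<in>Pow UNIV. (-1)^card T * osc_int Q \<xi> \<epsilon> (cT a b T)) =
     (\<Sum>T\<in>Pow UNIV. integral\<^sup>L lborel (\<lambda>t. (-1)^card T * (indicator (bset \<epsilon> (cT a b T)) t *\<^sub>R hfun Q \<xi> t)))"
    unfolding osc_int_eq set_lebesgue_integral_def by (rule sum.cong[OF refl], rule integral_mult_right_zero[symmetric])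
  also have "\<dots> = integral\<^sup>L lborel (\<lambda>t. \<Sum>T\<in>Pow UNIV. (-1)^card T * (indicator (bset \<epsilon> (cT a b T)) t *\<^sub>R hfun Q \<xi> t))"
  proof (rule sym, rule Bochner_Integration.integral_sum)
    fix T :: "'b set"
    show "integrable lborel (\<lambda>t. (-1)^card T * (indicator (bset \<epsilon> (cT a b T)) t *\<^sub>R hfun Q \<xi> t))"
      by (intro integrable_mult_right bset_integrable, use ab in auto)
  qed
  also have "\<dots> = integral\<^sup>L lborel (\<lambda>t. indicator (bset a b) t *\<^sub>R hfun Q \<xi> t)"
  proof (rule integral_cong_AE)
    show "AE t in lborel. (\<Sum>T\<in>Pow UNIV. (-1)^card T * (indicator (bset \<epsilon> (cT a b T)) t *\<^sub>R hfun Q \<xi> t)) =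
        indicator (bset a b) t *\<^sub>R hfun Q \<xi> t"
      using AE_abs_ne[of a]
    proof eventually_elim
      case (elim t)
      have "(\<Sum>T\<in>Pow UNIV. (-1)^card T * (indicator (bset \<epsilon> (cT a b T)) t *\<^sub>R hfun Q \<xi> t)) =
         complex_of_real (\<Sum>T\<in>Pow UNIV. (-1)^card T * indicator (bset \<epsilon> (cT a b T)) t) * hfun Q \<xi> t"
        by (simp only: scaleR_conv_of_real sum_distrib_right of_real_sum of_real_mult of_real_power of_real_minus of_real_1 mult.assoc)
      also have "\<dots> = indicator (bset a b) t *\<^sub>R hfun Q \<xi> t"
        using incl_excl_pt[OF _ elim] ab by (simp add: scaleR_conv_of_real)
      finally show ?case .
    qed
  qed measurable
  finally show ?thesis by (simp add: osc_int_eq set_lebesgue_integral_def)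
qed

lemma nontriv: "at (0::real^'n::finite) within {\<epsilon>. \<forall>j. 0 < \<epsilon>$j} \<noteq> bot"
proof -
  have "(0::real^'n) islimpt {\<epsilon>. \<forall>j. 0 < \<epsilon>$j}"
  proof (unfold islimpt_approachable, intro allI impI)
    fix e :: real assume e: "0 < e"
    define k where "k = e / (2 * (1 + real CARD('n)))"
    have k: "0 < k" using e by (simp add: k_def)
    define x where "x = (\<chi> j::'n. k)"
    have "norm x \<le> (\<Sum>j\<in>UNIV. \<bar>x$j\<bar>)" by (rule norm_le_l1_cart)
    also have "\<dots> = real CARD('n) * k" using k by (simp add: x_def)
    also have "\<dots> < e" using e by (simp add: k_def field_simps add_pos_nonneg)
    finally have "norm x < e" .
    then have d: "dist x 0 < e" by (simp add: dist_norm)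
    have xin: "x \<in> {\<epsilon>. \<forall>j. 0 < \<epsilon>$j}" using k by (simp add: x_def)
    have x0: "x \<noteq> 0" using k by (simp add: x_def vec_eq_iff)
    show "\<exists>x'\<in>{\<epsilon>::real^'n. \<forall>j. 0 < \<epsilon>$j}. x' \<noteq> 0 \<and> dist x' 0 < e"
    proof (rule bexI[of _ x])
      show "x \<noteq> 0 \<and> dist x 0 < e" using d x0 by (rule conjI[rotated])
      show "x \<in> {\<epsilon>::real^'n. \<forall>j. 0 < \<epsilon>$j}" by (rule xin)
    qed
  qed
  then show ?thesis using trivial_limit_within by blast
qed

lemma eventually_small:
  assumes "\<forall>j. 0 < a$j"
  shows "eventually (\<lambda>\<epsilon>. \<forall>j. 0 < \<epsilon>$j \<and> \<epsilon>$j < a$j) (at (0::real^'n::finite) within {\<epsilon>. \<forall>j. 0 < \<epsilon>$j})"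
proof -
  define d where "d = Min (range (\<lambda>j. a$j))"
  have d: "0 < d" using assms by (simp add: d_def)
  have da: "d \<le> a$j" for j by (simp add: d_def)
  show ?thesis
    unfolding eventually_at
  proof (intro exI[of _ d] conjI ballI impI d)
    fix x :: "real^'n" assume x: "x \<in> {\<epsilon>. \<forall>j. 0 < \<epsilon>$j}" "x \<noteq> 0 \<and> dist x 0 < d"
    show "\<forall>j. 0 < x$j \<and> x$j < a$j"
    proof (intro allI conjI)
      fix j
      show "0 < x$j" using x by simp
      have "\<bar>x$j\<bar> \<le> norm x" by (rule component_le_norm_cart)
      then show "x$j < a$j" using x da[of j] by (simp add: dist_norm) linarith
    qed
  qed
qed

lemma stepA:
  fixes Q :: "'d::finite \<Rightarrow> real^'n::finite \<Rightarrow> real"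
  assumes [measurable]: "\<And>\<nu>. Q \<nu> \<in> borel_measurable borel"
    and H: "\<forall>r\<in>IS S. \<forall>\<xi>. \<exists>L. ((\<lambda>\<epsilon>. osc_int Q \<xi> \<epsilon> r) \<longlongrightarrow> L) (at 0 within {\<epsilon>. \<forall>j. 0 < \<epsilon>$j}) \<and> norm L \<le> M"
    and ab: "\<forall>j. 0 < a$j \<and> a$j < b$j" and b: "b \<in> IS S"
  shows "norm (osc_int Q \<xi> a b) \<le> real (card (Pow (UNIV::'n::finite set))) * M"
proof -
  let ?F = "at (0::real^'n) within {\<epsilon>. \<forall>j. 0 < \<epsilon>$j}"
  have cTin: "cT a b T \<in> IS S" for T using ab b by (auto simp: IS_def cT_def) (meson less_trans)
  have "\<forall>T. \<exists>L. ((\<lambda>\<epsilon>. osc_int Q \<xi> \<epsilon> (cT a b T)) \<longlongrightarrow> L) ?F \<and> norm L \<le> M"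
    using H cTin by blast
  then obtain L where L: "\<And>T. ((\<lambda>\<epsilon>. osc_int Q \<xi> \<epsilon> (cT a b T)) \<longlongrightarrow> L T) ?F \<and> norm (L T) \<le> M"
    by metis
  have ev: "eventually (\<lambda>\<epsilon>. \<forall>j. 0 < \<epsilon>$j \<and> \<epsilon>$j < a$j) ?F"
    using ab by (intro eventually_small) auto
  then have ev2: "eventually (\<lambda>\<epsilon>. (\<Sum>T\<in>Pow UNIV. (-1)^card T * osc_int Q \<xi> \<epsilon> (cT a b T)) = osc_int Q \<xi> a b) ?F"
  proof eventually_elim
    case (elim \<epsilon>)
    then show ?case using incl_excl[of Q \<epsilon> a b \<xi>] ab by auto
  qed
  have lim: "((\<lambda>\<epsilon>. \<Sum>T\<in>Pow UNIV. (-1)^card T * osc_int Q \<xi> \<epsilon> (cT a b T)) \<longlongrightarrow> (\<Sum>T\<in>Pow UNIV. (-1)^card T * L T)) ?F"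
    by (intro tendsto_intros) (use L in auto)
  have "((\<lambda>\<epsilon>. osc_int Q \<xi> a b) \<longlongrightarrow> (\<Sum>T\<in>Pow UNIV. (-1)^card T * L T)) ?F"
    by (rule Lim_transform_eventually[OF lim ev2])
  then have eq: "osc_int Q \<xi> a b = (\<Sum>T\<in>Pow UNIV. (-1)^card T * L T)"
    by (rule tendsto_unique[OF nontriv tendsto_const])
  have "norm (osc_int Q \<xi> a b) \<le> (\<Sum>T\<in>Pow UNIV. norm ((-1)^card T * L T))"
    unfolding eq by (rule norm_sum)
  also have "\<dots> \<le> (\<Sum>T\<in>Pow (UNIV::'n set). M)"
    by (intro sum_mono) (simp add: norm_mult norm_power L)
  also have "\<dots> = real (card (Pow (UNIV::'n set))) * M" by simp
  finally show ?thesis .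
qed

definition dmul :: "real^'n::finite \<Rightarrow> real^'n \<Rightarrow> real^'n" where
  "dmul D x = (\<chi> j. D$j * x$j)"

lemma dmul_meas[measurable]: "dmul D \<in> borel_measurable borel"
  unfolding dmul_def by (rule borel_measurable_continuous_onI) (intro continuous_intros)

lemma Basis_cart: "(Basis :: (real^'n::finite) set) = (\<lambda>i. axis i 1) ` UNIV"
  by (auto simp: Basis_vec_def)

lemma integral_dmul:
  fixes f :: "real^'n::finite \<Rightarrow> complex"
  assumes f[measurable]: "f \<in> borel_measurable borel" and D: "\<forall>j. 0 < D$j"
  shows "integral\<^sup>L lborel f = (\<Prod>j\<in>UNIV. D$j) *\<^sub>R integral\<^sup>L lborel (\<lambda>s. f (dmul D s))"
proof -
  define c where "c = (\<lambda>b::real^'n. D \<bullet> b)"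
  define T where "T = (\<lambda>x::real^'n. 0 + (\<Sum>j\<in>Basis. (c j * (x \<bullet> j)) *\<^sub>R j))"
  have cax: "c (axis i 1) = D$i" for i by (simp add: c_def cart_eq_inner_axis)
  have c0: "c j \<noteq> 0" if "j \<in> Basis" for j
    using that D by (auto simp: Basis_cart cax) (metis less_irrefl)
  have T: "T x = dmul D x" for x
  proof -
    have "T x = (\<Sum>j\<in>Basis. (dmul D x \<bullet> j) *\<^sub>R j)"
      unfolding T_def
      by (intro trans[OF add_0_left] sum.cong refl)
         (auto simp: Basis_cart cax dmul_def cart_eq_inner_axis[symmetric])
    also have "\<dots> = dmul D x" by (rule euclidean_representation)
    finally show ?thesis .
  qed
  have pc: "(\<Prod>j\<in>Basis. \<bar>c j\<bar>) = (\<Prod>j\<in>UNIV. D$j)"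
  proof -
    have inj: "inj (\<lambda>i::'n. axis i (1::real))" by (auto simp: inj_def axis_eq_axis)
    have "(\<Prod>j\<in>Basis. \<bar>c j\<bar>) = (\<Prod>i\<in>UNIV. \<bar>c (axis i 1)\<bar>)"
      unfolding Basis_cart by (rule prod.reindex[OF inj, unfolded comp_def])
    also have "\<dots> = (\<Prod>j\<in>UNIV. D$j)" using D by (intro prod.cong) (auto simp: cax less_imp_le)
    finally show ?thesis .
  qed
  have Tm: "T = dmul D" using T by auto
  have "integral\<^sup>L lborel f = integral\<^sup>L (density (distr lborel borel T) (\<lambda>_. (\<Prod>j\<in>Basis. \<bar>c j\<bar>))) f"
    using lborel_affine_euclidean[of c 0, OF c0] unfolding T_def by simp
  also have "\<dots> = integral\<^sup>L (distr lborel borel T) (\<lambda>x. (\<Prod>j\<in>Basis. \<bar>c j\<bar>) *\<^sub>R f x)"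
    by (rule integral_density) (auto simp: prod_nonneg)
  also have "\<dots> = integral\<^sup>L lborel (\<lambda>s. (\<Prod>j\<in>Basis. \<bar>c j\<bar>) *\<^sub>R f (T s))"
    by (rule integral_distr) (auto simp: Tm)
  also have "\<dots> = (\<Prod>j\<in>UNIV. D$j) *\<^sub>R integral\<^sup>L lborel (\<lambda>s. f (dmul D s))"
    by (simp add: pc Tm)
  finally show ?thesis .
qed

lemma norm_hfun_le:
  assumes lo: "\<forall>j. 0 < lo$j" and x: "x \<in> bset lo hi"
  shows "norm (hfun Q \<xi> x) \<le> 1 / (\<Prod>j\<in>UNIV. lo$j)"
proof -
  have le: "(\<Prod>j\<in>UNIV. lo$j) \<le> (\<Prod>j\<in>UNIV. \<bar>x$j\<bar>)"
    using x lo by (intro prod_mono) (auto simp: bset_def less_imp_le)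
  have pos: "0 < (\<Prod>j\<in>UNIV. lo$j)" using lo by (intro prod_pos) auto
  have "norm (hfun Q \<xi> x) = 1 / (\<Prod>j\<in>UNIV. \<bar>x$j\<bar>)"
    by (simp add: hfun_def norm_divide abs_prod flip: prod_norm)
  also have "\<dots> \<le> 1 / (\<Prod>j\<in>UNIV. lo$j)"
    using le pos by (intro divide_left_mono) auto
  finally show ?thesis .
qed

lemma bset_dmul:
  assumes "\<forall>j. 0 < D$j"
  shows "dmul D s \<in> bset (dmul D a) (dmul D b) \<longleftrightarrow> s \<in> bset a b"
proof -
  have "(D$j * a$j < \<bar>D$j * s$j\<bar> \<and> \<bar>D$j * s$j\<bar> < D$j * b$j) \<longleftrightarrow> (a$j < \<bar>s$j\<bar> \<and> \<bar>s$j\<bar> < b$j)" for j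
    using assms[rule_format, of j] by (simp add: abs_mult)
  then show ?thesis by (simp add: bset_def dmul_def)
qed

lemma hfun_dmul:
  assumes D: "\<forall>j. 0 < D$j"
  shows "(\<Prod>j\<in>UNIV. D$j) *\<^sub>R hfun Q \<xi> (dmul D s) = hfun (\<lambda>\<nu> s. Q \<nu> (dmul D s)) \<xi> s"
proof -
  have p: "(\<Prod>j\<in>UNIV. (dmul D s)$j) = (\<Prod>j\<in>UNIV. D$j) * (\<Prod>j\<in>UNIV. s$j)"
    by (simp add: dmul_def prod.distrib)
  have pD: "(\<Prod>j\<in>UNIV. D$j) \<noteq> 0" using D by (simp add: less_imp_neq[symmetric])
  show ?thesis
    unfolding hfun_def p using pD by (simp add: scaleR_conv_of_real field_simps)
qed

lemma monom_dmul:
  assumes d: "0 < \<delta>"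
  shows "monom (dmul (\<chi> j. \<delta> powr (u$j)) s) m = \<delta> powr (u \<bullet> mvec m) * monom s m"
proof -
  have e: "(\<delta> powr (u$j))^(m j) = \<delta> powr (u$j * real (m j))" for j
    using d by (simp add: powr_powr[symmetric] powr_realpow)
  have "monom (dmul (\<chi> j. \<delta> powr (u$j)) s) m = (\<Prod>j\<in>UNIV. (\<delta> powr (u$j))^(m j) * (s$j)^(m j))"
    by (simp add: monom_def dmul_def power_mult_distrib)
  also have "\<dots> = (\<Prod>j\<in>UNIV. \<delta> powr (u$j * real (m j))) * monom s m"
    by (simp add: prod.distrib monom_def e)
  also have "(\<Prod>j\<in>UNIV. \<delta> powr (u$j * real (m j))) = \<delta> powr (u \<bullet> mvec m)"
    using d by (simp add: powr_sum[symmetric] inner_vec_def mvec_def)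
  finally show ?thesis .
qed

lemma poly_lim:
  assumes fin: "finite L"
    and rG: "\<forall>m\<in>L. mvec m \<in> G \<longrightarrow> u \<bullet> mvec m = r"
    and rN: "\<forall>m\<in>L. mvec m \<notin> G \<longrightarrow> r < u \<bullet> mvec m"
  shows "(\<lambda>k. inverse (real (Suc k)) powr (-r) * polyP c L (dmul (\<chi> j. inverse (real (Suc k)) powr (u$j)) s))
           \<longlonglongrightarrow> polyP c {m\<in>L. mvec m \<in> G} s"
proof -
  define \<delta> where "\<delta> = (\<lambda>k::nat. inverse (real (Suc k)))"
  have dpos: "0 < \<delta> k" for k by (simp add: \<delta>_def)
  have dlim: "\<delta> \<longlonglongrightarrow> 0" unfolding \<delta>_def by (rule LIMSEQ_inverse_real_of_nat)
  have eq: "\<delta> k powr (-r) * polyP c L (dmul (\<chi> j. \<delta> k powr (u$j)) s) =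
      (\<Sum>m\<in>L. c m * \<delta> k powr (u \<bullet> mvec m - r) * monom s m)" for k
  proof -
    have "\<delta> k powr (-r) * polyP c L (dmul (\<chi> j. \<delta> k powr (u$j)) s) =
        (\<Sum>m\<in>L. c m * (\<delta> k powr (-r) * \<delta> k powr (u \<bullet> mvec m)) * monom s m)"
      by (simp add: polyP_def monom_dmul[OF dpos] sum_distrib_left mult_ac)
    also have "\<dots> = (\<Sum>m\<in>L. c m * \<delta> k powr (u \<bullet> mvec m - r) * monom s m)"
      by (simp add: powr_add[symmetric])
    finally show ?thesis .
  qed
  have rhs: "polyP c {m\<in>L. mvec m \<in> G} s = (\<Sum>m\<in>L. if mvec m \<in> G then c m * monom s m else 0)"
    unfolding polyP_def using fin by (simp add: sum.inter_filter)
  have "(\<lambda>k. \<Sum>m\<in>L. c m * \<delta> k powr (u \<bullet> mvec m - r) * monom s m) \<longlonglongrightarrow>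
        (\<Sum>m\<in>L. if mvec m \<in> G then c m * monom s m else 0)"
  proof (rule tendsto_sum)
    fix m assume m: "m \<in> L"
    show "(\<lambda>k. c m * \<delta> k powr (u \<bullet> mvec m - r) * monom s m) \<longlonglongrightarrow> (if mvec m \<in> G then c m * monom s m else 0)"
    proof (cases "mvec m \<in> G")
      case True
      then have "u \<bullet> mvec m - r = 0" using rG m by auto
      then show ?thesis using True dpos by (simp add: less_imp_neq[symmetric])
    next
      case False
      then have pos: "0 < u \<bullet> mvec m - r" using rN m by auto
      have "(\<lambda>k. \<delta> k powr (u \<bullet> mvec m - r)) \<longlonglongrightarrow> 0"
        by (rule tendsto_zero_powrI[OF dlim tendsto_const _ pos]) (simp add: dpos less_imp_le)
      then have "(\<lambda>k. c m * \<delta> k powr (u \<bullet> mvec m - r) * monom s m) \<longlonglongrightarrow> c m * 0 * monom s m"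
        by (intro tendsto_intros)
      then show ?thesis using False by simp
    qed
  qed
  moreover have fe: "(\<lambda>k. \<delta> k powr (-r) * polyP c L (dmul (\<chi> j. \<delta> k powr (u$j)) s)) =
      (\<lambda>k. \<Sum>m\<in>L. c m * \<delta> k powr (u \<bullet> mvec m - r) * monom s m)" by (intro ext eq)
  ultimately show ?thesis unfolding rhs \<delta>_def by (simp only:)
qed



theorem mainTheorem17:
  fixes \<Lambda> :: "'d::finite \<Rightarrow> ('n::finite \<Rightarrow> nat) set"
    and c :: "'d \<Rightarrow> ('n \<Rightarrow> nat) \<Rightarrow> real"
    and S S0 :: "'n set"
    and F :: "'d \<Rightarrow> (real^'n) set"
    and u :: "real^'n"
  assumes "\<forall>\<nu>. finite (\<Lambda> \<nu>) \<and> \<Lambda> \<nu> \<noteq> {}"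
    and "\<forall>\<nu>. \<forall>m\<in>\<Lambda> \<nu>. c \<nu> m \<noteq> 0"
    and "\<forall>\<nu>. is_face (F \<nu>) (newton (\<Lambda> \<nu>) S)"
    and "\<exists>M. \<forall>r\<in>IS S. \<forall>\<xi>. \<exists>L.
           ((\<lambda>\<epsilon>. osc_int (\<lambda>\<nu>. polyP (c \<nu>) (\<Lambda> \<nu>)) \<xi> \<epsilon> r) \<longlongrightarrow> L)
             (at 0 within {\<epsilon>. \<forall>j. 0 < \<epsilon>$j}) \<and> norm L \<le> M"
    and "S0 \<subseteq> S"
    and "\<forall>\<nu>. u \<in> dual_int (F \<nu>) (newton (\<Lambda> \<nu>) S) S"
    and "\<forall>j\<in>S0. u$j = 0"
    and "\<forall>j\<in>S - S0. 0 < u$j"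
  shows "\<exists>M. \<forall>\<xi> a b. a \<in> IS S0 \<and> b \<in> IS S0 \<and> (\<forall>j. a$j < b$j) \<longrightarrow>
           norm (osc_int (\<lambda>\<nu>. polyP (c \<nu>) {m\<in>\<Lambda> \<nu>. mvec m \<in> F \<nu>}) \<xi> a b) \<le> M"
proof -
  define Q where "Q = (\<lambda>\<nu>. polyP (c \<nu>) (\<Lambda> \<nu>))"
  define QF where "QF = (\<lambda>\<nu>. polyP (c \<nu>) {m\<in>\<Lambda> \<nu>. mvec m \<in> F \<nu>})"
  have Qm[measurable]: "\<And>\<nu>. Q \<nu> \<in> borel_measurable borel" by (simp add: Q_def)
  have QFm[measurable]: "\<And>\<nu>. QF \<nu> \<in> borel_measurable borel" by (simp add: QF_def)
  obtain M where H: "\<forall>r\<in>IS S. \<forall>\<xi>. \<exists>L. ((\<lambda>\<epsilon>. osc_int Q \<xi> \<epsilon> r) \<longlongrightarrow> L) (at 0 within {\<epsilon>. \<forall>j. 0 < \<epsilon>$j}) \<and> norm L \<le> M"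
    using assms(4) unfolding Q_def by blast
  have "\<forall>\<nu>. \<exists>rr. F \<nu> \<noteq> {} \<longrightarrow> (\<forall>x\<in>F \<nu>. u \<bullet> x = rr) \<and> (\<forall>y\<in>newton (\<Lambda> \<nu>) S - F \<nu>. rr < u \<bullet> y)"
    using assms(6) by (auto simp: dual_int_def split: if_splits)
  then obtain rr where rr: "\<And>\<nu>. F \<nu> \<noteq> {} \<Longrightarrow> (\<forall>x\<in>F \<nu>. u \<bullet> x = rr \<nu>) \<and> (\<forall>y\<in>newton (\<Lambda> \<nu>) S - F \<nu>. rr \<nu> < u \<bullet> y)"
    by metis
  have mN: "mvec m \<in> newton (\<Lambda> \<nu>) S" if "m \<in> \<Lambda> \<nu>" for m \<nu>
  proof -
    have "mvec m + 0 \<in> {mvec m + u | m u. m \<in> \<Lambda> \<nu> \<and> u \<in> Rplus S}"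
      using that by (auto simp: Rplus_def intro!: exI[of _ 0])
    then show ?thesis unfolding newton_def by (simp add: hull_inc)
  qed
  define B where "B = real (card (Pow (UNIV::'n set))) * M"
  show ?thesis
  proof (intro exI[of _ B] allI impI)
    fix \<xi> :: "real^'d" and a b :: "real^'n"
    assume ab: "a \<in> IS S0 \<and> b \<in> IS S0 \<and> (\<forall>j. a$j < b$j)"
    have apos: "\<forall>j. 0 < a$j" using ab by (simp add: IS_def)
    define \<delta> where "\<delta> = (\<lambda>k::nat. inverse (real (Suc k)))"
    have dpos: "0 < \<delta> k" for k by (simp add: \<delta>_def)
    have dlim: "\<delta> \<longlonglongrightarrow> 0" unfolding \<delta>_def by (rule LIMSEQ_inverse_real_of_nat)
    define D where "D = (\<lambda>k. \<chi> j. \<delta> k powr (u$j))"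
    have Dpos: "\<forall>j. 0 < D k $ j" for k using dpos[of k] by (auto simp: D_def)
    define \<xi>' where "\<xi>' = (\<lambda>k. \<chi> \<nu>. if F \<nu> = {} then 0 else \<xi>$\<nu> * \<delta> k powr (- rr \<nu>))"
    define g where "g = (\<lambda>k s. indicator (bset a b) s *\<^sub>R hfun (\<lambda>\<nu> s. Q \<nu> (dmul (D k) s)) (\<xi>' k) s)"
    have K2: "osc_int Q (\<xi>' k) (dmul (D k) a) (dmul (D k) b) = integral\<^sup>L lborel (g k)" for k
    proof -
      have "osc_int Q (\<xi>' k) (dmul (D k) a) (dmul (D k) b) =
          integral\<^sup>L lborel (\<lambda>t. indicator (bset (dmul (D k) a) (dmul (D k) b)) t *\<^sub>R hfun Q (\<xi>' k) t)"
        by (simp add: osc_int_eq set_lebesgue_integral_def)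
      also have "\<dots> = (\<Prod>j\<in>UNIV. D k$j) *\<^sub>R integral\<^sup>L lborel
          (\<lambda>s. indicator (bset (dmul (D k) a) (dmul (D k) b)) (dmul (D k) s) *\<^sub>R hfun Q (\<xi>' k) (dmul (D k) s))"
        by (rule integral_dmul[OF _ Dpos]) measurable
      also have "\<dots> = integral\<^sup>L lborel
          (\<lambda>s. (\<Prod>j\<in>UNIV. D k$j) *\<^sub>R (indicator (bset (dmul (D k) a) (dmul (D k) b)) (dmul (D k) s) *\<^sub>R hfun Q (\<xi>' k) (dmul (D k) s)))"
        by (rule integral_scaleR_right[symmetric])
      also have "\<dots> = integral\<^sup>L lborel (g k)"
      proof (rule Bochner_Integration.integral_cong[OF refl])
        fix s
        show "(\<Prod>j\<in>UNIV. D k$j) *\<^sub>R (indicator (bset (dmul (D k) a) (dmul (D k) b)) (dmul (D k) s) *\<^sub>R hfun Q (\<xi>' k) (dmul (D k) s)) = g k s"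
          unfolding g_def indicator_def bset_dmul[OF Dpos] hfun_dmul[OF Dpos, symmetric] by simp
      qed
      finally show ?thesis .
    qed
    have K1: "eventually (\<lambda>k. norm (osc_int Q (\<xi>' k) (dmul (D k) a) (dmul (D k) b)) \<le> B) sequentially"
    proof -
      have "\<forall>j\<in>S - S0. eventually (\<lambda>k. \<delta> k powr (u$j) * b$j < 1) sequentially"
      proof
        fix j assume j: "j \<in> S - S0"
        have "(\<lambda>k. \<delta> k powr (u$j)) \<longlonglongrightarrow> 0"
          by (rule tendsto_zero_powrI[OF dlim tendsto_const]) (use dpos assms(8) j in \<open>auto simp: less_imp_le\<close>)
        then have "(\<lambda>k. \<delta> k powr (u$j) * b$j) \<longlonglongrightarrow> 0 * b$j" by (intro tendsto_intros)
        then show "eventually (\<lambda>k. \<delta> k powr (u$j) * b$j < 1) sequentially"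
          by (rule order_tendstoD) simp
      qed
      then have "eventually (\<lambda>k. \<forall>j\<in>S - S0. \<delta> k powr (u$j) * b$j < 1) sequentially"
        by (rule eventually_ball_finite[rotated]) simp
      then show ?thesis
      proof eventually_elim
        case (elim k)
        have bIS: "dmul (D k) b \<in> IS S"
          unfolding IS_def
        proof (intro CollectI allI conjI impI)
          fix j
          show "0 < dmul (D k) b $ j" using Dpos[of k] apos ab by (simp add: dmul_def) (meson less_trans mult_pos_pos)
          assume "j \<in> S"
          show "dmul (D k) b $ j < 1"
          proof (cases "j \<in> S0")
            case True
            then show ?thesis using assms(7) ab dpos by (simp add: dmul_def D_def IS_def)
          next
            case False
            then show ?thesis using elim \<open>j \<in> S\<close> by (simp add: dmul_def D_def)
          qed
        qed
        have ab': "\<forall>j. 0 < dmul (D k) a $ j \<and> dmul (D k) a $ j < dmul (D k) b $ j"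
          using Dpos[of k] apos ab by (simp add: dmul_def)
        show ?case unfolding B_def by (rule stepA[OF Qm H ab' bIS])
      qed
    qed
    have K3: "(\<lambda>k. integral\<^sup>L lborel (g k)) \<longlonglongrightarrow> osc_int QF \<xi> a b"
    proof -
      have "(\<lambda>k. integral\<^sup>L lborel (g k)) \<longlonglongrightarrow> integral\<^sup>L lborel (\<lambda>s. indicator (bset a b) s *\<^sub>R hfun QF \<xi> s)"
      proof (rule integral_dominated_convergence[where w="\<lambda>s. indicator (bset a b) s * (1 / (\<Prod>j\<in>UNIV. a$j))"])
        show "(\<lambda>s. indicator (bset a b) s *\<^sub>R hfun QF \<xi> s) \<in> borel_measurable lborel" by measurable
        show "g k \<in> borel_measurable lborel" for k unfolding g_def by measurable
        have "integrable lborel (\<lambda>s. indicator (bset a b) s *\<^sub>R (1 / (\<Prod>j\<in>UNIV. a$j)))"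
        proof (rule integrableI_bounded_set_indicator[where B="1 / (\<Prod>j\<in>UNIV. a$j)"])
          have "bset a b \<subseteq> cbox (-b) b"
            by (auto simp: bset_def mem_box_cart abs_less_iff less_imp_le; smt (verit))
          then have "bounded (bset a b)" using bounded_cbox bounded_subset by blast
          then show "emeasure lborel (bset a b) < \<infinity>" by (rule emeasure_bounded_finite)
          have "0 < (\<Prod>j\<in>UNIV. a$j)" using apos by (intro prod_pos) auto
          then show "AE x in lborel. x \<in> bset a b \<longrightarrow> norm (1 / (\<Prod>j\<in>UNIV. a$j)) \<le> 1 / (\<Prod>j\<in>UNIV. a$j)"
            by simp
        qed auto
        then show "integrable lborel (\<lambda>s. indicator (bset a b) s * (1 / (\<Prod>j\<in>UNIV. a$j)))" by simp
        show "AE s in lborel. norm (g k s) \<le> indicator (bset a b) s * (1 / (\<Prod>j\<in>UNIV. a$j))" for k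
        proof (rule AE_I2)
          fix s show "norm (g k s) \<le> indicator (bset a b) s * (1 / (\<Prod>j\<in>UNIV. a$j))"
            using norm_hfun_le[OF apos, of s b] by (auto simp: g_def indicator_def)
        qed
        show "AE s in lborel. (\<lambda>k. g k s) \<longlonglongrightarrow> indicator (bset a b) s *\<^sub>R hfun QF \<xi> s"
        proof (rule AE_I2)
          fix s
          have lim\<nu>: "(\<lambda>k. \<xi>' k $ \<nu> * Q \<nu> (dmul (D k) s)) \<longlonglongrightarrow> \<xi>$\<nu> * QF \<nu> s" for \<nu>
          proof (cases "F \<nu> = {}")
            case True
            then show ?thesis by (simp add: \<xi>'_def QF_def polyP_def)
          next
            case False
            have rG: "\<forall>m\<in>\<Lambda> \<nu>. mvec m \<in> F \<nu> \<longrightarrow> u \<bullet> mvec m = rr \<nu>" using rr[OF False] by auto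
            have rN: "\<forall>m\<in>\<Lambda> \<nu>. mvec m \<notin> F \<nu> \<longrightarrow> rr \<nu> < u \<bullet> mvec m" using rr[OF False] mN by auto
            have "(\<lambda>k. \<xi>$\<nu> * (inverse (real (Suc k)) powr (- rr \<nu>) * polyP (c \<nu>) (\<Lambda> \<nu>) (dmul (\<chi> j. inverse (real (Suc k)) powr (u$j)) s)))
                \<longlonglongrightarrow> \<xi>$\<nu> * polyP (c \<nu>) {m\<in>\<Lambda> \<nu>. mvec m \<in> F \<nu>} s"
              by (intro tendsto_mult_left poly_lim) (use assms(1) rG rN in auto)
            then show ?thesis using False by (simp add: \<xi>'_def QF_def Q_def D_def \<delta>_def mult.assoc)
          qed
          have "(\<lambda>k. hfun (\<lambda>\<nu> s. Q \<nu> (dmul (D k) s)) (\<xi>' k) s) \<longlonglongrightarrow> hfun QF \<xi> s"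
            unfolding hfun_def divide_inverse by (intro tendsto_intros lim\<nu>)
          then show "(\<lambda>k. g k s) \<longlonglongrightarrow> indicator (bset a b) s *\<^sub>R hfun QF \<xi> s"
            unfolding g_def by (intro tendsto_intros)
        qed
      qed
      then show ?thesis by (simp add: osc_int_eq set_lebesgue_integral_def)
    qed
    have "norm (osc_int QF \<xi> a b) \<le> B"
    proof (rule Lim_norm_ubound[OF trivial_limit_sequentially K3])
      show "eventually (\<lambda>k. norm (integral\<^sup>L lborel (g k)) \<le> B) sequentially"
        using K1 by (simp add: K2)
    qed
    then show "norm (osc_int (\<lambda>\<nu>. polyP (c \<nu>) {m\<in>\<Lambda> \<nu>. mvec m \<in> F \<nu>}) \<xi> a b) \<le> B"
      by (simp add: QF_def)
  qed
qed

end
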